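(* Let $H\in(1/2,1)$, $\alpha\in(1-H,1)$, $T>0$, $N\ge2$, $h=T/N$, $t_n=nh$. For $s\in(t_{j-1},t_j]$ let $\hat s=t_{j-1}$ and $$A(\cdot;s)=\big((\hat s-\cdot)^{\alpha-1}-(s-\cdot)^{\alpha-1}\big)\mathbf 1_{(0,\hat s)}(\cdot)+(s-\cdot)^{\alpha-1}\mathbf 1_{(\hat s,s)}(\cdot).$$ Then there is a constant $C$ (independent of $N$) such that for all $1\le i<j\le N$, $s\in(t_{i-1},t_i]$ and $\tau\in(t_{j-1},t_j]$, $$\int_{[0,T]^2}A(u;s)A(v;\tau)|u-v|^{2H-2}\,\mathrm du\,\mathrm dv\le Ch^{2\alpha}(\tau-s)^{2H-2}.$$ *)

theory Defs
  imports "HOL-Analysis.Analysis"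
begin

definition Akern :: "real \<Rightarrow> real \<Rightarrow> real \<Rightarrow> real \<Rightarrow> real" where
  "Akern \<alpha> shat s u =
     ((shat - u) powr (\<alpha> - 1) - (s - u) powr (\<alpha> - 1)) * indicator {0<..<shat} u
     + (s - u) powr (\<alpha> - 1) * indicator {shat<..<s} u"

end

theory Submission
  imports Defs
begin


lemma B1:
  fixes e L :: real
  assumes "0 \<le> e" "e < 1" "0 \<le> L"
  shows "(\<integral>\<^sup>+x. ennreal (indicator {0..L} x * x powr (-e)) \<partial>lborel) = ennreal (L powr (1-e) / (1-e))"
proof -
  have "((\<lambda>x. x powr (-e)) has_integral (L powr (-e+1) / (-e+1))) {0..L}"
    by (rule has_integral_powr_from_0) (use assms in auto)
  moreover have eq: "(\<lambda>x. indicator {0..L} x * x powr (-e)) = (\<lambda>x. if x \<in> {0..L} then x powr (-e) else 0)"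
    by (auto simp: indicator_def fun_eq_iff)
  ultimately have "((\<lambda>x. indicator {0..L} x * x powr (-e)) has_integral (L powr (1-e) / (1-e))) UNIV"
    unfolding eq has_integral_restrict_UNIV by (simp add: add.commute)
  thus ?thesis
    by (intro nn_integral_has_integral_lborel) (auto simp: indicator_def)
qed

lemma B2:
  fixes e R :: real
  assumes "e < -1" "0 < R"
  shows "(\<integral>\<^sup>+x. ennreal (indicator {R..} x * x powr e) \<partial>lborel) = ennreal (R powr (e+1) / (-e-1))"
proof -
  have "((\<lambda>x. x powr e) has_integral (-(R powr (e+1)) / (e+1))) {R..}"
    by (rule has_integral_powr_to_inf) (use assms in auto)
  moreover have eq: "(\<lambda>x. indicator {R..} x * x powr e) = (\<lambda>x. if x \<in> {R..} then x powr e else 0)"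
    by (auto simp: indicator_def fun_eq_iff)
  moreover have "-(R powr (e+1)) / (e+1) = R powr (e+1) / (-e-1)"
    using assms by (simp add: field_simps)
  ultimately have "((\<lambda>x. indicator {R..} x * x powr e) has_integral (R powr (e+1) / (-e-1))) UNIV"
    unfolding eq has_integral_restrict_UNIV by simp
  thus ?thesis
    using assms by (intro nn_integral_has_integral_lborel) (auto simp: indicator_def)
qed



lemma int_refl:
  fixes f :: "real \<Rightarrow> ennreal"
  assumes [measurable]: "f \<in> borel_measurable borel"
  shows "(\<integral>\<^sup>+x. f (p - x) \<partial>lborel) = (\<integral>\<^sup>+x. f x \<partial>lborel)"
  using nn_integral_real_affine[of f "-1" p] by simp

lemma int_shift:
  fixes f :: "real \<Rightarrow> ennreal"
  assumes [measurable]: "f \<in> borel_measurable borel"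
  shows "(\<integral>\<^sup>+x. f (x - p) \<partial>lborel) = (\<integral>\<^sup>+x. f x \<partial>lborel)"
  using nn_integral_real_affine[of "\<lambda>x. f (x - p)" 1 p] by simp

definition mf :: "real \<Rightarrow> real \<Rightarrow> real \<Rightarrow> real" where
  "mf \<alpha> h x = (if 0 < x then min (x powr (\<alpha>-1)) (h * x powr (\<alpha>-2)) else 0)"

lemma mf_meas[measurable]: "mf \<alpha> h \<in> borel_measurable borel"
  unfolding mf_def by measurable

lemma mf_nonneg: "0 \<le> h \<Longrightarrow> 0 \<le> mf \<alpha> h x"
  by (auto simp: mf_def)

lemma mf_le_pow: "mf \<alpha> h x \<le> x powr (\<alpha>-1)"
  by (auto simp: mf_def)

lemma mf_le_split:
  assumes "0 < h"
  shows "mf \<alpha> h x \<le> indicator {0..h} x * x powr (\<alpha>-1) + h * (indicator {h..} x * x powr (\<alpha>-2))"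
proof (cases "0 < x")
  case True
  show ?thesis
  proof (cases "x \<le> h")
    case True
    then show ?thesis using \<open>0 < x\<close> assms by (auto simp: mf_def indicator_def intro!: add_increasing2)
  next
    case False
    then show ?thesis using \<open>0 < x\<close> assms by (auto simp: mf_def indicator_def)
  qed
qed (use assms in \<open>auto simp: mf_def indicator_def\<close>)

lemma mf_int:
  assumes "0 < h" "0 < \<alpha>" "\<alpha> < 1"
  shows "(\<integral>\<^sup>+x. ennreal (mf \<alpha> h x) \<partial>lborel) \<le> ennreal (h powr \<alpha> * (1/\<alpha> + 1/(1-\<alpha>)))"
proof -
  have "(\<integral>\<^sup>+x. ennreal (mf \<alpha> h x) \<partial>lborel) \<le>
     (\<integral>\<^sup>+x. ennreal (indicator {0..h} x * x powr (\<alpha>-1)) + ennreal h * ennreal (indicator {h..} x * x powr (\<alpha>-2)) \<partial>lborel)"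
    apply (intro nn_integral_mono)
    using mf_le_split[OF assms(1), of \<alpha>] assms
    by (simp add: ennreal_mult'[symmetric] ennreal_plus[symmetric] ennreal_leI del: ennreal_plus)
  also have "\<dots> = (\<integral>\<^sup>+x. ennreal (indicator {0..h} x * x powr (\<alpha>-1)) \<partial>lborel) + ennreal h * (\<integral>\<^sup>+x. ennreal (indicator {h..} x * x powr (\<alpha>-2)) \<partial>lborel)"
    by (subst nn_integral_add) (auto simp: nn_integral_cmult)
  also have "(\<integral>\<^sup>+x. ennreal (indicator {0..h} x * x powr (\<alpha>-1)) \<partial>lborel) = ennreal (h powr \<alpha> / \<alpha>)"
    using B1[of "1-\<alpha>" h] assms by simp
  also have "(\<integral>\<^sup>+x. ennreal (indicator {h..} x * x powr (\<alpha>-2)) \<partial>lborel) = ennreal (h powr (\<alpha>-1) / (1-\<alpha>))"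
    using B2[of "\<alpha>-2" h] assms by simp
  also have "ennreal (h powr \<alpha> / \<alpha>) + ennreal h * ennreal (h powr (\<alpha>-1) / (1-\<alpha>)) = ennreal (h powr \<alpha> * (1/\<alpha> + 1/(1-\<alpha>)))"
  proof -
    have "h * h powr (\<alpha>-1) = h powr \<alpha>" using assms by (simp add: powr_diff)
    thus ?thesis using assms
      by (simp add: ennreal_mult'[symmetric] ennreal_plus[symmetric] distrib_left del: ennreal_plus)
  qed
  finally show ?thesis .
qed



lemma ennreal_le_add: "0 \<le> a \<Longrightarrow> 0 \<le> b \<Longrightarrow> x \<le> a + b \<Longrightarrow> ennreal x \<le> ennreal a + ennreal b"
  by (simp add: ennreal_leI flip: ennreal_plus)

lemma ennreal_mult_add:
  "0 \<le> a \<Longrightarrow> 0 \<le> b \<Longrightarrow> 0 \<le> c \<Longrightarrow> 0 \<le> d \<Longrightarrow>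
   ennreal a * ennreal b + ennreal c * ennreal d = ennreal (a * b + c * d)"
  by (simp add: ennreal_mult)

lemma abs_pow_split:
  fixes e l y z :: real
  assumes "0 \<le> e"
  shows "indicator {z-l..z+l} y * \<bar>y - z\<bar> powr (-e) \<le>
         indicator {0..l} (z - y) * (z - y) powr (-e) + indicator {0..l} (y - z) * (y - z) powr (-e)"
proof (cases "y \<le> z")
  case True
  then show ?thesis by (auto simp: indicator_def)
next
  case False
  then show ?thesis by (auto simp: indicator_def)
qed

lemma L_sym:
  fixes e l z :: real
  assumes "0 \<le> e" "e < 1" "0 \<le> l"
  shows "(\<integral>\<^sup>+y. ennreal (indicator {z-l..z+l} y * \<bar>y - z\<bar> powr (-e)) \<partial>lborel) \<le> ennreal (2 * (l powr (1-e) / (1-e)))"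
proof -
  let ?g = "\<lambda>x. ennreal (indicator {0..l} x * x powr (-e))"
  have "(\<integral>\<^sup>+y. ennreal (indicator {z-l..z+l} y * \<bar>y - z\<bar> powr (-e)) \<partial>lborel) \<le> (\<integral>\<^sup>+y. ?g (z - y) + ?g (y - z) \<partial>lborel)"
    by (intro nn_integral_mono ennreal_le_add abs_pow_split assms) (auto simp: indicator_def)
  also have "\<dots> = (\<integral>\<^sup>+y. ?g (z - y) \<partial>lborel) + (\<integral>\<^sup>+y. ?g (y - z) \<partial>lborel)"
    by (rule nn_integral_add) auto
  also have "\<dots> = ennreal (l powr (1-e) / (1-e)) + ennreal (l powr (1-e) / (1-e))"
    by (subst int_refl, measurable, subst int_shift, measurable) (simp add: B1 assms)
  also have "\<dots> = ennreal (2 * (l powr (1-e) / (1-e)))"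
    using assms by (simp flip: ennreal_plus)
  finally show ?thesis .
qed

lemma L_F2:
  fixes e l a0 z :: real
  assumes "0 \<le> e" "e < 1" "0 < l"
  shows "(\<integral>\<^sup>+y. ennreal (indicator {a0..a0+l} y * \<bar>y - z\<bar> powr (-e)) \<partial>lborel) \<le> ennreal ((2/(1-e) + 1) * l powr (1-e))"
proof -
  have pw: "indicator {a0..a0+l} y * \<bar>y - z\<bar> powr (-e) \<le> indicator {z-l..z+l} y * \<bar>y - z\<bar> powr (-e) + l powr (-e) * indicator {a0..a0+l} y" for y
  proof (cases "\<bar>y - z\<bar> \<le> l")
    case True
    then show ?thesis by (auto simp: indicator_def)
  next
    case False
    then have "\<bar>y - z\<bar> powr (-e) \<le> l powr (-e)"
      using assms by (intro powr_mono2') auto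
    then show ?thesis using False by (auto simp: indicator_def)
  qed
  have "(\<integral>\<^sup>+y. ennreal (indicator {a0..a0+l} y * \<bar>y - z\<bar> powr (-e)) \<partial>lborel) \<le>
      (\<integral>\<^sup>+y. ennreal (indicator {z-l..z+l} y * \<bar>y - z\<bar> powr (-e)) + ennreal (l powr (-e)) * indicator {a0..a0+l} y \<partial>lborel)"
    apply (intro nn_integral_mono)
    apply (subst ennreal_indicator[symmetric])
    apply (subst ennreal_mult[symmetric], simp, simp)
    by (intro ennreal_le_add pw) auto
  also have "\<dots> = (\<integral>\<^sup>+y. ennreal (indicator {z-l..z+l} y * \<bar>y - z\<bar> powr (-e)) \<partial>lborel) + ennreal (l powr (-e)) * ennreal l"
    using assms by (subst nn_integral_add) (auto simp: nn_integral_cmult)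
  also have "\<dots> \<le> ennreal (2 * (l powr (1-e) / (1-e))) + ennreal (l powr (-e)) * ennreal l"
    by (intro add_mono L_sym assms order_refl) (use assms in auto)
  also have "\<dots> = ennreal ((2/(1-e) + 1) * l powr (1-e))"
  proof -
    have "l powr (-e) * l = l powr (1-e)" using powr_add[of l "-e" 1] assms by simp
    thus ?thesis using assms by (simp add: ennreal_mult[symmetric] ennreal_plus[symmetric] algebra_simps del: ennreal_plus)
  qed
  finally show ?thesis .
qed



lemma L_F4:
  fixes R b \<alpha> w :: real
  assumes "0 \<le> b" "b < 1" "\<alpha> < 1" "0 < R"
  shows "(\<integral>\<^sup>+x. ennreal (indicator {R..} x * x powr (\<alpha>-2) * \<bar>x - w\<bar> powr (-b)) \<partial>lborel)
          \<le> ennreal (R powr (\<alpha>-1-b) * (2/(1-b) + 1/(1-\<alpha>)))"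
proof -
  have pw: "indicator {R..} x * x powr (\<alpha>-2) * \<bar>x - w\<bar> powr (-b) \<le>
     R powr (\<alpha>-2) * (indicator {w-R..w+R} x * \<bar>x - w\<bar> powr (-b)) + R powr (-b) * (indicator {R..} x * x powr (\<alpha>-2))" for x
  proof (cases "R \<le> x")
    case True
    have xa: "x powr (\<alpha>-2) \<le> R powr (\<alpha>-2)" using True assms by (intro powr_mono2') auto
    show ?thesis
    proof (cases "\<bar>x - w\<bar> \<le> R")
      case True
      have "x powr (\<alpha>-2) * \<bar>x - w\<bar> powr (-b) \<le> R powr (\<alpha>-2) * \<bar>x - w\<bar> powr (-b)"
        using xa by (intro mult_right_mono) auto
      moreover have "indicator {w-R..w+R} x = (1::real)" using True by (auto simp: indicator_def)
      moreover have "0 \<le> R powr (-b) * (indicator {R..} x * x powr (\<alpha>-2))" by auto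
      ultimately show ?thesis using \<open>R \<le> x\<close> by (simp add: indicator_def, intro add_increasing2) auto
    next
      case False
      then have "\<bar>x - w\<bar> powr (-b) \<le> R powr (-b)"
        using assms by (intro powr_mono2') auto
      then have "x powr (\<alpha>-2) * \<bar>x - w\<bar> powr (-b) \<le> R powr (-b) * x powr (\<alpha>-2)"
        by (subst mult.commute, intro mult_right_mono) auto
      moreover have "indicator {w-R..w+R} x = (0::real)" using False by (auto simp: indicator_def)
      moreover have "indicator {R..} x = (1::real)" using \<open>R \<le> x\<close> by (auto simp: indicator_def)
      ultimately show ?thesis by simp
    qed
  next
    case False
    then show ?thesis by (auto simp: indicator_def)
  qed
  have "(\<integral>\<^sup>+x. ennreal (indicator {R..} x * x powr (\<alpha>-2) * \<bar>x - w\<bar> powr (-b)) \<partial>lborel) \<le>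
     (\<integral>\<^sup>+x. ennreal (R powr (\<alpha>-2)) * ennreal (indicator {w-R..w+R} x * \<bar>x - w\<bar> powr (-b))
         + ennreal (R powr (-b)) * ennreal (indicator {R..} x * x powr (\<alpha>-2)) \<partial>lborel)"
    apply (intro nn_integral_mono)
    apply (subst ennreal_mult[symmetric], simp, simp)+
    by (intro ennreal_le_add pw) auto
  also have "\<dots> = ennreal (R powr (\<alpha>-2)) * (\<integral>\<^sup>+x. ennreal (indicator {w-R..w+R} x * \<bar>x - w\<bar> powr (-b)) \<partial>lborel)
         + ennreal (R powr (-b)) * (\<integral>\<^sup>+x. ennreal (indicator {R..} x * x powr (\<alpha>-2)) \<partial>lborel)"
    by (subst nn_integral_add) (auto simp: nn_integral_cmult)
  also have "\<dots> \<le> ennreal (R powr (\<alpha>-2)) * ennreal (2 * (R powr (1-b) / (1-b)))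
         + ennreal (R powr (-b)) * ennreal (R powr (\<alpha>-1) / (1-\<alpha>))"
    using B2[of "\<alpha>-2" R] assms
    by (intro add_mono mult_left_mono L_sym) auto
  also have "\<dots> = ennreal (R powr (\<alpha>-1-b) * (2/(1-b) + 1/(1-\<alpha>)))"
  proof -
    have e1: "R powr (\<alpha>-2) * R powr (1-b) = R powr (\<alpha>-1-b)" unfolding powr_add[symmetric] by (rule arg_cong[where f="\<lambda>t. R powr t"]) simp
    have e2: "R powr (-b) * R powr (\<alpha>-1) = R powr (\<alpha>-1-b)" unfolding powr_add[symmetric] by (rule arg_cong[where f="\<lambda>t. R powr t"]) simp
    have "R powr (\<alpha>-2) * (2 * (R powr (1-b) / (1-b))) + R powr (-b) * (R powr (\<alpha>-1) / (1-\<alpha>))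
        = R powr (\<alpha>-1-b) * (2/(1-b) + 1/(1-\<alpha>))"
      using e1 e2 by (simp add: algebra_simps)
    moreover have "ennreal (R powr (\<alpha>-2)) * ennreal (2 * (R powr (1-b) / (1-b)))
         + ennreal (R powr (-b)) * ennreal (R powr (\<alpha>-1) / (1-\<alpha>)) =
       ennreal (R powr (\<alpha>-2) * (2 * (R powr (1-b) / (1-b))) + R powr (-b) * (R powr (\<alpha>-1) / (1-\<alpha>)))"
      using assms by (intro ennreal_mult_add) auto
    ultimately show ?thesis by simp
  qed
  finally show ?thesis .
qed

lemma L_F4u:
  fixes R b \<alpha> p v :: real
  assumes "0 \<le> b" "b < 1" "\<alpha> < 1" "0 < R"
  shows "(\<integral>\<^sup>+u. ennreal (indicator {R..} (p - u) * (p - u) powr (\<alpha>-2) * \<bar>u - v\<bar> powr (-b)) \<partial>lborel)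
          \<le> ennreal (R powr (\<alpha>-1-b) * (2/(1-b) + 1/(1-\<alpha>)))"
proof -
  have "(\<integral>\<^sup>+u. ennreal (indicator {R..} (p - u) * (p - u) powr (\<alpha>-2) * \<bar>u - v\<bar> powr (-b)) \<partial>lborel)
     = (\<integral>\<^sup>+u. (\<lambda>x. ennreal (indicator {R..} x * x powr (\<alpha>-2) * \<bar>x - (p - v)\<bar> powr (-b))) (p - u) \<partial>lborel)"
    by (intro nn_integral_cong) (simp add: abs_minus_commute)
  also have "\<dots> = (\<integral>\<^sup>+x. ennreal (indicator {R..} x * x powr (\<alpha>-2) * \<bar>x - (p - v)\<bar> powr (-b)) \<partial>lborel)"
    by (rule int_refl) measurable
  finally show ?thesis using L_F4[OF assms, of "p - v"] by simp
qed



lemma amgm3: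
  fixes x y w h P r \<theta> :: real
  assumes pos: "0 < x" "0 < y" "0 < w" "0 < h" and th: "0 \<le> \<theta>" "\<theta> \<le> 1/2"
  defines "a \<equiv> P * (1 - \<theta>)" and "b \<equiv> 2 * \<theta> * r"
  shows "x powr (-a) * y powr (-a) * w powr (-b) \<le>
     h powr (2*P-2*a-b) * (x powr (-P) * y powr (-P)) + h powr (P+r-2*a-b) * (x powr (-P) * w powr (-r))
     + h powr (P+r-2*a-b) * (y powr (-P) * w powr (-r))"
proof -
  define T1 where "T1 = h powr (2*P-2*a-b) * (x powr (-P) * y powr (-P))"
  define T2 where "T2 = h powr (P+r-2*a-b) * (x powr (-P) * w powr (-r))"
  define T3 where "T3 = h powr (P+r-2*a-b) * (y powr (-P) * w powr (-r))"
  have p: "T1 > 0" "T2 > 0" "T3 > 0" using pos by (auto simp: T1_def T2_def T3_def)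
  have eq: "x powr (-a) * y powr (-a) * w powr (-b) = T1 powr (1-2*\<theta>) * (T2 powr (1/2) * T3 powr (1/2)) powr (2*\<theta>)"
    using pos unfolding T1_def T2_def T3_def a_def b_def
    by (simp add: powr_def ln_mult exp_add[symmetric] algebra_simps)
  have G: "T2 powr (1/2) * T3 powr (1/2) \<le> 1/2 * T2 + 1/2 * T3"
    using Youngs_inequality_0[of "1/2" "1/2" T2 T3] p by simp
  have "T1 powr (1-2*\<theta>) * (T2 powr (1/2) * T3 powr (1/2)) powr (2*\<theta>) \<le> (1-2*\<theta>) * T1 + 2*\<theta> * (T2 powr (1/2) * T3 powr (1/2))"
    using Youngs_inequality_0[of "1-2*\<theta>" "2*\<theta>" T1 "T2 powr (1/2) * T3 powr (1/2)"] p th by simp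
  also have "\<dots> \<le> T1 + (T2 + T3)"
  proof -
    have g0: "0 \<le> T2 powr (1/2) * T3 powr (1/2)" by simp
    have "2*\<theta> * (T2 powr (1/2) * T3 powr (1/2)) \<le> T2 powr (1/2) * T3 powr (1/2)"
      using th g0 by (intro mult_left_le_one_le) auto
    moreover have "(1-2*\<theta>) * T1 \<le> T1" using th p by (intro mult_left_le_one_le) auto
    ultimately show ?thesis using G p by linarith
  qed
  finally show ?thesis using eq unfolding T1_def T2_def T3_def by simp
qed



lemma B1r:
  fixes e L p :: real
  assumes "0 \<le> e" "e < 1" "0 \<le> L"
  shows "(\<integral>\<^sup>+u. ennreal (indicator {p-L..p} u * (p - u) powr (-e)) \<partial>lborel) = ennreal (L powr (1-e) / (1-e))"
proof -
  have "(\<integral>\<^sup>+u. ennreal (indicator {p-L..p} u * (p - u) powr (-e)) \<partial>lborel)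
      = (\<integral>\<^sup>+u. (\<lambda>x. ennreal (indicator {0..L} x * x powr (-e))) (p - u) \<partial>lborel)"
    by (intro nn_integral_cong) (auto simp: indicator_def)
  also have "\<dots> = (\<integral>\<^sup>+x. ennreal (indicator {0..L} x * x powr (-e)) \<partial>lborel)"
    by (rule int_refl) measurable
  finally show ?thesis using B1[OF assms] by simp
qed

lemma prod_int:
  fixes F G :: "real \<Rightarrow> ennreal"
  assumes [measurable]: "F \<in> borel_measurable borel" "G \<in> borel_measurable borel"
  shows "(\<integral>\<^sup>+z. F (fst z) * G (snd z) \<partial>(lborel \<Otimes>\<^sub>M lborel)) = (\<integral>\<^sup>+u. F u \<partial>lborel) * (\<integral>\<^sup>+v. G v \<partial>lborel)"
proof -
  have "(\<integral>\<^sup>+z. F (fst z) * G (snd z) \<partial>(lborel \<Otimes>\<^sub>M lborel)) = (\<integral>\<^sup>+u. \<integral>\<^sup>+v. F u * G v \<partial>lborel \<partial>lborel)"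
    by (subst lborel.nn_integral_fst[symmetric]) auto
  also have "\<dots> = (\<integral>\<^sup>+u. F u * (\<integral>\<^sup>+v. G v \<partial>lborel) \<partial>lborel)"
    by (simp add: nn_integral_cmult)
  also have "\<dots> = (\<integral>\<^sup>+u. F u \<partial>lborel) * (\<integral>\<^sup>+v. G v \<partial>lborel)"
    by (simp add: nn_integral_multc)
  finally show ?thesis .
qed

lemma fst_int_bound:
  fixes F :: "real \<Rightarrow> ennreal" and K :: "real \<times> real \<Rightarrow> ennreal"
  assumes [measurable]: "F \<in> borel_measurable borel" "K \<in> borel_measurable (lborel \<Otimes>\<^sub>M lborel)"
  assumes B: "\<And>u. (\<integral>\<^sup>+v. K (u, v) \<partial>lborel) \<le> B"
  shows "(\<integral>\<^sup>+z. F (fst z) * K z \<partial>(lborel \<Otimes>\<^sub>M lborel)) \<le> (\<integral>\<^sup>+u. F u \<partial>lborel) * B"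
proof -
  have "(\<integral>\<^sup>+z. F (fst z) * K z \<partial>(lborel \<Otimes>\<^sub>M lborel)) = (\<integral>\<^sup>+u. \<integral>\<^sup>+v. F u * K (u, v) \<partial>lborel \<partial>lborel)"
    by (subst lborel.nn_integral_fst[symmetric]) auto
  also have "\<dots> = (\<integral>\<^sup>+u. F u * (\<integral>\<^sup>+v. K (u, v) \<partial>lborel) \<partial>lborel)"
    by (simp add: nn_integral_cmult)
  also have "\<dots> \<le> (\<integral>\<^sup>+u. F u * B \<partial>lborel)"
    by (intro nn_integral_mono mult_left_mono B) auto
  also have "\<dots> = (\<integral>\<^sup>+u. F u \<partial>lborel) * B"
    by (simp add: nn_integral_multc)
  finally show ?thesis .
qed

lemma snd_int_bound:
  fixes G :: "real \<Rightarrow> ennreal" and K :: "real \<times> real \<Rightarrow> ennreal"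
  assumes [measurable]: "G \<in> borel_measurable borel" "K \<in> borel_measurable (lborel \<Otimes>\<^sub>M lborel)"
  assumes B: "\<And>v. (\<integral>\<^sup>+u. K (u, v) \<partial>lborel) \<le> B"
  shows "(\<integral>\<^sup>+z. G (snd z) * K z \<partial>(lborel \<Otimes>\<^sub>M lborel)) \<le> (\<integral>\<^sup>+v. G v \<partial>lborel) * B"
proof -
  have "(\<integral>\<^sup>+z. G (snd z) * K z \<partial>(lborel \<Otimes>\<^sub>M lborel)) = (\<integral>\<^sup>+v. \<integral>\<^sup>+u. G v * K (u, v) \<partial>lborel \<partial>lborel)"
    by (subst lborel_pair.nn_integral_snd[symmetric]) auto
  also have "\<dots> = (\<integral>\<^sup>+v. G v * (\<integral>\<^sup>+u. K (u, v) \<partial>lborel) \<partial>lborel)"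
    by (simp add: nn_integral_cmult)
  also have "\<dots> \<le> (\<integral>\<^sup>+v. G v * B \<partial>lborel)"
    by (intro nn_integral_mono mult_left_mono B) auto
  also have "\<dots> = (\<integral>\<^sup>+v. G v \<partial>lborel) * B"
    by (simp add: nn_integral_multc)
  finally show ?thesis .
qed



lemma ennreal_3:
  fixes c1 c2 X Y Z :: real
  assumes "0\<le>c1" "0\<le>c2" "0\<le>X" "0\<le>Y" "0\<le>Z"
  shows "ennreal (c1*X + c2*Y + c2*Z) = ennreal c1 * ennreal X + ennreal c2 * ennreal Y + ennreal c2 * ennreal Z"
  using assms by (simp add: ennreal_mult)

lemma L2D:
  fixes p q h P r \<theta> :: real
  assumes h: "0 < h" and P: "0 \<le> P" "P < 1" and r: "0 \<le> r" "r < 1" and th: "0 \<le> \<theta>" "\<theta> \<le> 1/2"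
  defines "a \<equiv> P * (1 - \<theta>)" and "b \<equiv> 2 * \<theta> * r"
  shows "(\<integral>\<^sup>+z. ennreal (indicator {p-h..p} (fst z) * indicator {q-h..q} (snd z) * (p - fst z) powr (-a)
            * (q - snd z) powr (-a) * \<bar>fst z - snd z\<bar> powr (-b)) \<partial>(lborel \<Otimes>\<^sub>M lborel))
         \<le> ennreal ((1/(1-P)^2 + 2*((2/(1-r)+1)/(1-P))) * h powr (2-2*a-b))"
proof -
  define c1 where "c1 = h powr (2*P-2*a-b)"
  define c2 where "c2 = h powr (P+r-2*a-b)"
  define fP where "fP = (\<lambda>u. ennreal (indicator {p-h..p} u * (p - u) powr (-P)))"
  define gP where "gP = (\<lambda>v. ennreal (indicator {q-h..q} v * (q - v) powr (-P)))"
  define K2 where "K2 = (\<lambda>z. ennreal (indicator {q-h..q} (snd z) * \<bar>fst z - snd z\<bar> powr (-r)))"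
  define K3 where "K3 = (\<lambda>z::real\<times>real. ennreal (indicator {p-h..p} (fst z) * \<bar>fst z - snd z\<bar> powr (-r)))"
  have mm[measurable]: "fP \<in> borel_measurable borel" "gP \<in> borel_measurable borel"
     "K2 \<in> borel_measurable (lborel \<Otimes>\<^sub>M lborel)" "K3 \<in> borel_measurable (lborel \<Otimes>\<^sub>M lborel)"
    unfolding fP_def gP_def K2_def K3_def by measurable
  have pw: "ennreal (indicator {p-h..p} u * indicator {q-h..q} v * (p - u) powr (-a)
            * (q - v) powr (-a) * \<bar>u - v\<bar> powr (-b))
       \<le> ennreal c1 * (fP u * gP v) + ennreal c2 * (fP u * K2 (u,v)) + ennreal c2 * (gP v * K3 (u,v))" for u v
  proof -
    let ?A = "indicator {p-h..p} u * (p - u) powr (-P)"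
    let ?B = "indicator {q-h..q} v * (q - v) powr (-P)"
    let ?C = "indicator {q-h..q} v * \<bar>u - v\<bar> powr (-r)"
    let ?D = "indicator {p-h..p} u * \<bar>u - v\<bar> powr (-r)"
    have real: "indicator {p-h..p} u * indicator {q-h..q} v * (p - u) powr (-a)
            * (q - v) powr (-a) * \<bar>u - v\<bar> powr (-b) \<le> c1 * (?A * ?B) + c2 * (?A * ?C) + c2 * (?B * ?D)"
    proof (cases "u \<in> {p-h..p} \<and> v \<in> {q-h..q} \<and> u \<noteq> p \<and> v \<noteq> q \<and> u \<noteq> v")
      case True
      then have pos: "0 < p - u" "0 < q - v" "0 < \<bar>u - v\<bar>" by auto
      show ?thesis
        using amgm3[OF pos h th, of P r] True unfolding a_def b_def c1_def c2_def
        by (simp add: indicator_def algebra_simps)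
    next
      case False
      then have "indicator {p-h..p} u * indicator {q-h..q} v * (p - u) powr (-a)
            * (q - v) powr (-a) * \<bar>u - v\<bar> powr (-b) = 0"
        by (auto simp: indicator_def)
      moreover have "0 \<le> c1 * (?A * ?B) + c2 * (?A * ?C) + c2 * (?B * ?D)"
        unfolding c1_def c2_def by (intro add_nonneg_nonneg mult_nonneg_nonneg) auto
      ultimately show ?thesis by linarith
    qed
    have "ennreal (c1 * (?A * ?B) + c2 * (?A * ?C) + c2 * (?B * ?D)) =
          ennreal c1 * (fP u * gP v) + ennreal c2 * (fP u * K2 (u,v)) + ennreal c2 * (gP v * K3 (u,v))"
      apply (subst ennreal_3)
      unfolding fP_def gP_def K2_def K3_def c1_def c2_def
      by (auto simp: ennreal_mult)
    with real show ?thesis by (metis ennreal_leI)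
  qed
  have "(\<integral>\<^sup>+z. ennreal (indicator {p-h..p} (fst z) * indicator {q-h..q} (snd z) * (p - fst z) powr (-a)
            * (q - snd z) powr (-a) * \<bar>fst z - snd z\<bar> powr (-b)) \<partial>(lborel \<Otimes>\<^sub>M lborel))
     \<le> (\<integral>\<^sup>+z. ennreal c1 * (fP (fst z) * gP (snd z)) + ennreal c2 * (fP (fst z) * K2 z) + ennreal c2 * (gP (snd z) * K3 z) \<partial>(lborel \<Otimes>\<^sub>M lborel))"
    by (intro nn_integral_mono) (metis pw prod.collapse)
  also have "\<dots> = ennreal c1 * (\<integral>\<^sup>+z. fP (fst z) * gP (snd z) \<partial>(lborel \<Otimes>\<^sub>M lborel))
      + ennreal c2 * (\<integral>\<^sup>+z. fP (fst z) * K2 z \<partial>(lborel \<Otimes>\<^sub>M lborel))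
      + ennreal c2 * (\<integral>\<^sup>+z. gP (snd z) * K3 z \<partial>(lborel \<Otimes>\<^sub>M lborel))"
    by (simp add: nn_integral_add nn_integral_cmult)
  also have "\<dots> \<le> ennreal c1 * (ennreal (h powr (1-P) / (1-P)) * ennreal (h powr (1-P) / (1-P)))
      + ennreal c2 * (ennreal (h powr (1-P) / (1-P)) * ennreal ((2/(1-r) + 1) * h powr (1-r)))
      + ennreal c2 * (ennreal (h powr (1-P) / (1-P)) * ennreal ((2/(1-r) + 1) * h powr (1-r)))"
  proof -
    have iF: "(\<integral>\<^sup>+u. fP u \<partial>lborel) = ennreal (h powr (1-P) / (1-P))"
      unfolding fP_def using B1r[of P h p] P h by simp
    have iG: "(\<integral>\<^sup>+u. gP u \<partial>lborel) = ennreal (h powr (1-P) / (1-P))"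
      unfolding gP_def using B1r[of P h q] P h by simp
    have k2: "(\<integral>\<^sup>+v. K2 (u, v) \<partial>lborel) \<le> ennreal ((2/(1-r) + 1) * h powr (1-r))" for u
      unfolding K2_def using L_F2[of r h "q-h" u] r h by (simp add: abs_minus_commute)
    have k3: "(\<integral>\<^sup>+u. K3 (u, v) \<partial>lborel) \<le> ennreal ((2/(1-r) + 1) * h powr (1-r))" for v
      unfolding K3_def using L_F2[of r h "p-h" v] r h by simp
    show ?thesis
      apply (intro add_mono mult_left_mono)
      subgoal by (simp add: prod_int iF iG)
      subgoal by simp
      subgoal by (rule order.trans[OF fst_int_bound[OF mm(1) mm(3) k2]]) (simp add: iF)
      subgoal by simp
      subgoal by (rule order.trans[OF snd_int_bound[OF mm(2) mm(4) k3]]) (simp add: iG)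
      subgoal by simp
      done
  qed
  also have "\<dots> = ennreal ((1/(1-P)^2 + 2*((2/(1-r)+1)/(1-P))) * h powr (2-2*a-b))"
  proof -
    have e1: "c1 * (h powr (1-P) / (1-P) * (h powr (1-P) / (1-P))) = 1/(1-P)^2 * h powr (2-2*a-b)"
    proof -
      have "c1 * (h powr (1-P) * h powr (1-P)) = h powr (2-2*a-b)"
        unfolding c1_def powr_add[symmetric] by (rule arg_cong[where f="\<lambda>t. h powr t"]) simp
      thus ?thesis by (simp add: power2_eq_square field_simps)
    qed
    have e2: "c2 * (h powr (1-P) / (1-P) * ((2/(1-r) + 1) * h powr (1-r))) = (2/(1-r)+1)/(1-P) * h powr (2-2*a-b)"
    proof -
      have "c2 * (h powr (1-P) * h powr (1-r)) = h powr (2-2*a-b)"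
        unfolding c2_def powr_add[symmetric] by (rule arg_cong[where f="\<lambda>t. h powr t"]) simp
      thus ?thesis using P by (simp add: field_simps)
    qed
    define X where "X = h powr (1-P) / (1-P)"
    define Y where "Y = (2/(1-r) + 1) * h powr (1-r)"
    have X0: "0 \<le> X" and Y0: "0 \<le> Y" and c10: "0 \<le> c1" and c20: "0 \<le> c2"
      using P r unfolding X_def Y_def c1_def c2_def by auto
    have "ennreal c1 * (ennreal X * ennreal X) + ennreal c2 * (ennreal X * ennreal Y) + ennreal c2 * (ennreal X * ennreal Y)
        = ennreal (c1 * (X * X) + c2 * (X * Y) + c2 * (X * Y))"
      using X0 Y0 c10 c20 by (subst ennreal_3) (simp_all add: ennreal_mult)
    also have "c1 * (X * X) + c2 * (X * Y) + c2 * (X * Y) = (1/(1-P)^2 + 2*((2/(1-r)+1)/(1-P))) * h powr (2-2*a-b)"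
      using e1 e2 unfolding X_def Y_def by (simp add: algebra_simps)
    finally show ?thesis unfolding X_def Y_def .
  qed
  finally show ?thesis .
qed



lemma mf_int_refl:
  assumes "0 < h" "0 < \<alpha>" "\<alpha> < 1"
  shows "(\<integral>\<^sup>+u. ennreal (mf \<alpha> h (p - u)) \<partial>lborel) \<le> ennreal (h powr \<alpha> * (1/\<alpha> + 1/(1-\<alpha>)))"
proof -
  have "(\<integral>\<^sup>+u. ennreal (mf \<alpha> h (p - u)) \<partial>lborel) = (\<integral>\<^sup>+u. ennreal (mf \<alpha> h u) \<partial>lborel)"
    by (rule int_refl[of "\<lambda>x. ennreal (mf \<alpha> h x)"]) measurable
  thus ?thesis using mf_int[OF assms] by simp
qed

lemma tailX:
  fixes p q h \<alpha> b R :: real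
  assumes "0 < h" "0 < \<alpha>" "\<alpha> < 1" "0 \<le> b" "b < 1" "h \<le> R"
  shows "(\<integral>\<^sup>+z. ennreal h * (ennreal (mf \<alpha> h (q - snd z)) * ennreal (indicator {R..} (p - fst z) * (p - fst z) powr (\<alpha>-2) * \<bar>fst z - snd z\<bar> powr (-b))) \<partial>(lborel \<Otimes>\<^sub>M lborel))
     \<le> ennreal h * (ennreal (h powr \<alpha> * (1/\<alpha> + 1/(1-\<alpha>))) * ennreal (R powr (\<alpha>-1-b) * (2/(1-b) + 1/(1-\<alpha>))))"
proof -
  have m1: "(\<lambda>v. ennreal (mf \<alpha> h (q - v))) \<in> borel_measurable borel" by measurable
  have m2: "(\<lambda>z. ennreal (indicator {R..} (p - fst z) * (p - fst z) powr (\<alpha>-2) * \<bar>fst z - snd z\<bar> powr (-b))) \<in> borel_measurable (lborel \<Otimes>\<^sub>M lborel)"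
    by measurable
  have B: "(\<integral>\<^sup>+u. ennreal (indicator {R..} (p - fst (u,v)) * (p - fst (u,v)) powr (\<alpha>-2) * \<bar>fst (u,v) - snd (u,v)\<bar> powr (-b)) \<partial>lborel)
      \<le> ennreal (R powr (\<alpha>-1-b) * (2/(1-b) + 1/(1-\<alpha>)))" for v
    using L_F4u[of b \<alpha> R p v] assms by simp
  have "(\<integral>\<^sup>+z. ennreal h * (ennreal (mf \<alpha> h (q - snd z)) * ennreal (indicator {R..} (p - fst z) * (p - fst z) powr (\<alpha>-2) * \<bar>fst z - snd z\<bar> powr (-b))) \<partial>(lborel \<Otimes>\<^sub>M lborel))
     = ennreal h * (\<integral>\<^sup>+z. ennreal (mf \<alpha> h (q - snd z)) * ennreal (indicator {R..} (p - fst z) * (p - fst z) powr (\<alpha>-2) * \<bar>fst z - snd z\<bar> powr (-b)) \<partial>(lborel \<Otimes>\<^sub>M lborel))"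
    by (rule nn_integral_cmult) measurable
  also have "\<dots> \<le> ennreal h * ((\<integral>\<^sup>+v. ennreal (mf \<alpha> h (q - v)) \<partial>lborel) * ennreal (R powr (\<alpha>-1-b) * (2/(1-b) + 1/(1-\<alpha>))))"
    by (intro mult_left_mono snd_int_bound[OF m1 m2 B]) auto
  also have "\<dots> \<le> ennreal h * (ennreal (h powr \<alpha> * (1/\<alpha> + 1/(1-\<alpha>))) * ennreal (R powr (\<alpha>-1-b) * (2/(1-b) + 1/(1-\<alpha>))))"
    by (intro mult_left_mono mult_right_mono mf_int_refl assms) auto
  finally show ?thesis .
qed

lemma tailY:
  fixes p q h \<alpha> b R :: real
  assumes "0 < h" "0 < \<alpha>" "\<alpha> < 1" "0 \<le> b" "b < 1" "h \<le> R"
  shows "(\<integral>\<^sup>+z. ennreal h * (ennreal (mf \<alpha> h (p - fst z)) * ennreal (indicator {R..} (q - snd z) * (q - snd z) powr (\<alpha>-2) * \<bar>fst z - snd z\<bar> powr (-b))) \<partial>(lborel \<Otimes>\<^sub>M lborel))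
     \<le> ennreal h * (ennreal (h powr \<alpha> * (1/\<alpha> + 1/(1-\<alpha>))) * ennreal (R powr (\<alpha>-1-b) * (2/(1-b) + 1/(1-\<alpha>))))"
proof -
  have m1: "(\<lambda>v. ennreal (mf \<alpha> h (p - v))) \<in> borel_measurable borel" by measurable
  have m2: "(\<lambda>z. ennreal (indicator {R..} (q - snd z) * (q - snd z) powr (\<alpha>-2) * \<bar>fst z - snd z\<bar> powr (-b))) \<in> borel_measurable (lborel \<Otimes>\<^sub>M lborel)"
    by measurable
  have B: "(\<integral>\<^sup>+v. ennreal (indicator {R..} (q - snd (u,v)) * (q - snd (u,v)) powr (\<alpha>-2) * \<bar>fst (u,v) - snd (u,v)\<bar> powr (-b)) \<partial>lborel)
      \<le> ennreal (R powr (\<alpha>-1-b) * (2/(1-b) + 1/(1-\<alpha>)))" for u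
    using L_F4u[of b \<alpha> R q u] assms by (simp add: abs_minus_commute)
  have "(\<integral>\<^sup>+z. ennreal h * (ennreal (mf \<alpha> h (p - fst z)) * ennreal (indicator {R..} (q - snd z) * (q - snd z) powr (\<alpha>-2) * \<bar>fst z - snd z\<bar> powr (-b))) \<partial>(lborel \<Otimes>\<^sub>M lborel))
     = ennreal h * (\<integral>\<^sup>+z. ennreal (mf \<alpha> h (p - fst z)) * ennreal (indicator {R..} (q - snd z) * (q - snd z) powr (\<alpha>-2) * \<bar>fst z - snd z\<bar> powr (-b)) \<partial>(lborel \<Otimes>\<^sub>M lborel))"
    by (rule nn_integral_cmult) measurable
  also have "\<dots> \<le> ennreal h * ((\<integral>\<^sup>+v. ennreal (mf \<alpha> h (p - v)) \<partial>lborel) * ennreal (R powr (\<alpha>-1-b) * (2/(1-b) + 1/(1-\<alpha>))))"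
    by (intro mult_left_mono fst_int_bound[OF m1 m2 B]) auto
  also have "\<dots> \<le> ennreal h * (ennreal (h powr \<alpha> * (1/\<alpha> + 1/(1-\<alpha>))) * ennreal (R powr (\<alpha>-1-b) * (2/(1-b) + 1/(1-\<alpha>))))"
    by (intro mult_left_mono mult_right_mono mf_int_refl assms) auto
  finally show ?thesis .
qed

lemma coreFar:
  fixes p q h \<alpha> K :: real
  assumes "0 < h" "0 < \<alpha>" "\<alpha> < 1" "0 \<le> K"
  shows "(\<integral>\<^sup>+z. ennreal K * (ennreal (mf \<alpha> h (p - fst z)) * ennreal (mf \<alpha> h (q - snd z))) \<partial>(lborel \<Otimes>\<^sub>M lborel))
     \<le> ennreal K * (ennreal (h powr \<alpha> * (1/\<alpha> + 1/(1-\<alpha>))) * ennreal (h powr \<alpha> * (1/\<alpha> + 1/(1-\<alpha>))))"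
proof -
  have m1: "(\<lambda>v. ennreal (mf \<alpha> h (p - v))) \<in> borel_measurable borel" by measurable
  have m2: "(\<lambda>v. ennreal (mf \<alpha> h (q - v))) \<in> borel_measurable borel" by measurable
  have "(\<integral>\<^sup>+z. ennreal K * (ennreal (mf \<alpha> h (p - fst z)) * ennreal (mf \<alpha> h (q - snd z))) \<partial>(lborel \<Otimes>\<^sub>M lborel))
     = ennreal K * (\<integral>\<^sup>+z. ennreal (mf \<alpha> h (p - fst z)) * ennreal (mf \<alpha> h (q - snd z)) \<partial>(lborel \<Otimes>\<^sub>M lborel))"
    by (rule nn_integral_cmult) measurable
  also have "\<dots> = ennreal K * ((\<integral>\<^sup>+v. ennreal (mf \<alpha> h (p - v)) \<partial>lborel) * (\<integral>\<^sup>+v. ennreal (mf \<alpha> h (q - v)) \<partial>lborel))"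
    using prod_int[OF m1 m2] by simp
  also have "\<dots> \<le> ennreal K * (ennreal (h powr \<alpha> * (1/\<alpha> + 1/(1-\<alpha>))) * ennreal (h powr \<alpha> * (1/\<alpha> + 1/(1-\<alpha>))))"
    by (intro mult_left_mono mult_mono mf_int_refl assms) auto
  finally show ?thesis .
qed



lemma mf_zero: "x \<le> 0 \<Longrightarrow> mf \<alpha> h x = 0" by (simp add: mf_def)

lemma mf_far: "0 < x \<Longrightarrow> mf \<alpha> h x \<le> h * x powr (\<alpha>-2)" by (simp add: mf_def)

lemma pw_split:
  fixes p q u v h \<alpha> b R :: real and CoreR :: real
  assumes h: "0 < h" "h \<le> R" and c0: "0 \<le> CoreR"
  and core: "0 < p - u \<Longrightarrow> p - u < R \<Longrightarrow> 0 < q - v \<Longrightarrow> q - v < R \<Longrightarrow>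
      mf \<alpha> h (p - u) * mf \<alpha> h (q - v) * \<bar>u - v\<bar> powr (-b) \<le> CoreR"
  shows "mf \<alpha> h (p - u) * mf \<alpha> h (q - v) * \<bar>u - v\<bar> powr (-b) \<le> CoreR
     + h * (mf \<alpha> h (q - v) * (indicator {R..} (p - u) * (p - u) powr (\<alpha>-2) * \<bar>u - v\<bar> powr (-b)))
     + h * (mf \<alpha> h (p - u) * (indicator {R..} (q - v) * (q - v) powr (\<alpha>-2) * \<bar>u - v\<bar> powr (-b)))"
proof -
  have mx: "0 \<le> mf \<alpha> h (p - u)" "0 \<le> mf \<alpha> h (q - v)" using h by (auto intro: mf_nonneg)
  define TX where "TX = h * (mf \<alpha> h (q - v) * (indicator {R..} (p - u) * (p - u) powr (\<alpha>-2) * \<bar>u - v\<bar> powr (-b)))"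
  define TY where "TY = h * (mf \<alpha> h (p - u) * (indicator {R..} (q - v) * (q - v) powr (\<alpha>-2) * \<bar>u - v\<bar> powr (-b)))"
  have tx: "0 \<le> TX" "0 \<le> TY" unfolding TX_def TY_def using h mx by (auto simp: indicator_def)
  have "mf \<alpha> h (p - u) * mf \<alpha> h (q - v) * \<bar>u - v\<bar> powr (-b) \<le> CoreR + TX + TY"
  proof (cases "p - u \<le> 0 \<or> q - v \<le> 0")
    case True
    then have "mf \<alpha> h (p - u) * mf \<alpha> h (q - v) = 0" by (auto simp: mf_zero)
    then have "mf \<alpha> h (p - u) * mf \<alpha> h (q - v) * \<bar>u - v\<bar> powr (-b) = 0" by simp
    then show ?thesis using c0 tx by linarith
  next
    case False
    then have pu: "0 < p - u" and qv: "0 < q - v" by auto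
    show ?thesis
    proof (cases "R \<le> p - u")
      case True
      have "mf \<alpha> h (p - u) * mf \<alpha> h (q - v) * \<bar>u - v\<bar> powr (-b) \<le> h * (p - u) powr (\<alpha>-2) * mf \<alpha> h (q - v) * \<bar>u - v\<bar> powr (-b)"
        using mf_far[OF pu, of \<alpha> h] mx by (intro mult_right_mono) auto
      also have "\<dots> = TX" unfolding TX_def using True by (simp add: indicator_def)
      finally show ?thesis using c0 tx by linarith
    next
      case False
      note F1 = False
      show ?thesis
      proof (cases "R \<le> q - v")
        case True
        have "mf \<alpha> h (p - u) * mf \<alpha> h (q - v) * \<bar>u - v\<bar> powr (-b) \<le> mf \<alpha> h (p - u) * (h * (q - v) powr (\<alpha>-2)) * \<bar>u - v\<bar> powr (-b)"
          using mf_far[OF qv, of \<alpha> h] mx by (intro mult_right_mono mult_left_mono) auto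
        also have "\<dots> = TY" unfolding TY_def using True by (simp add: indicator_def)
        finally show ?thesis using c0 tx by linarith
      next
        case False
        then show ?thesis using core[OF pu _ qv] F1 tx by linarith
      qed
    qed
  qed
  thus ?thesis unfolding TX_def TY_def .
qed



lemma KL_assemble:
  fixes p q h \<alpha> b R BC :: real and CoreR :: "real \<times> real \<Rightarrow> real"
  assumes h: "0 < h" "h \<le> R" and al: "0 < \<alpha>" "\<alpha> < 1" and b: "0 \<le> b" "b < 1"
  and cm[measurable]: "CoreR \<in> borel_measurable (lborel \<Otimes>\<^sub>M lborel)"
  and c0: "\<And>z. 0 \<le> CoreR z"
  and core: "\<And>u v. 0 < p - u \<Longrightarrow> p - u < R \<Longrightarrow> 0 < q - v \<Longrightarrow> q - v < R \<Longrightarrow>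
      mf \<alpha> h (p - u) * mf \<alpha> h (q - v) * \<bar>u - v\<bar> powr (-b) \<le> CoreR (u, v)"
  and BC: "(\<integral>\<^sup>+z. ennreal (CoreR z) \<partial>(lborel \<Otimes>\<^sub>M lborel)) \<le> ennreal BC"
  shows "(\<integral>\<^sup>+z. ennreal (mf \<alpha> h (p - fst z) * mf \<alpha> h (q - snd z) * \<bar>fst z - snd z\<bar> powr (-b)) \<partial>(lborel \<Otimes>\<^sub>M lborel))
    \<le> ennreal BC + 2 * (ennreal h * (ennreal (h powr \<alpha> * (1/\<alpha> + 1/(1-\<alpha>))) * ennreal (R powr (\<alpha>-1-b) * (2/(1-b) + 1/(1-\<alpha>)))))"
proof -
  define TX where "TX = (\<lambda>z::real\<times>real. ennreal h * (ennreal (mf \<alpha> h (q - snd z)) * ennreal (indicator {R..} (p - fst z) * (p - fst z) powr (\<alpha>-2) * \<bar>fst z - snd z\<bar> powr (-b))))"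
  define TY where "TY = (\<lambda>z::real\<times>real. ennreal h * (ennreal (mf \<alpha> h (p - fst z)) * ennreal (indicator {R..} (q - snd z) * (q - snd z) powr (\<alpha>-2) * \<bar>fst z - snd z\<bar> powr (-b))))"
  have [measurable]: "TX \<in> borel_measurable (lborel \<Otimes>\<^sub>M lborel)" "TY \<in> borel_measurable (lborel \<Otimes>\<^sub>M lborel)"
    unfolding TX_def TY_def by measurable
  have pw: "ennreal (mf \<alpha> h (p - fst z) * mf \<alpha> h (q - snd z) * \<bar>fst z - snd z\<bar> powr (-b)) \<le> ennreal (CoreR z) + TX z + TY z" for z
  proof -
    obtain u v where z: "z = (u, v)" by (cases z)
    have mx: "0 \<le> mf \<alpha> h (p - u)" "0 \<le> mf \<alpha> h (q - v)" using h by (auto intro: mf_nonneg)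
    have i1: "0 \<le> indicator {R..} (p - u) * (p - u) powr (\<alpha>-2) * \<bar>u - v\<bar> powr (-b)"
      and i2: "0 \<le> indicator {R..} (q - v) * (q - v) powr (\<alpha>-2) * \<bar>u - v\<bar> powr (-b)"
      by (auto simp: indicator_def)
    have real: "mf \<alpha> h (p - u) * mf \<alpha> h (q - v) * \<bar>u - v\<bar> powr (-b) \<le> CoreR (u,v)
     + h * (mf \<alpha> h (q - v) * (indicator {R..} (p - u) * (p - u) powr (\<alpha>-2) * \<bar>u - v\<bar> powr (-b)))
     + h * (mf \<alpha> h (p - u) * (indicator {R..} (q - v) * (q - v) powr (\<alpha>-2) * \<bar>u - v\<bar> powr (-b)))"
      by (rule pw_split[OF h c0 core])
    have "ennreal (CoreR (u,v)
     + h * (mf \<alpha> h (q - v) * (indicator {R..} (p - u) * (p - u) powr (\<alpha>-2) * \<bar>u - v\<bar> powr (-b)))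
     + h * (mf \<alpha> h (p - u) * (indicator {R..} (q - v) * (q - v) powr (\<alpha>-2) * \<bar>u - v\<bar> powr (-b))))
     = ennreal (CoreR z) + TX z + TY z"
      unfolding TX_def TY_def z using h mx i1 i2 c0[of "(u,v)"]
      by (simp add: ennreal_mult ennreal_plus)
    with real show ?thesis unfolding z by (metis ennreal_leI fst_conv snd_conv)
  qed
  have "(\<integral>\<^sup>+z. ennreal (mf \<alpha> h (p - fst z) * mf \<alpha> h (q - snd z) * \<bar>fst z - snd z\<bar> powr (-b)) \<partial>(lborel \<Otimes>\<^sub>M lborel))
     \<le> (\<integral>\<^sup>+z. ennreal (CoreR z) + TX z + TY z \<partial>(lborel \<Otimes>\<^sub>M lborel))"
    by (intro nn_integral_mono pw)
  also have "\<dots> = (\<integral>\<^sup>+z. ennreal (CoreR z) \<partial>(lborel \<Otimes>\<^sub>M lborel)) + (\<integral>\<^sup>+z. TX z \<partial>(lborel \<Otimes>\<^sub>M lborel)) + (\<integral>\<^sup>+z. TY z \<partial>(lborel \<Otimes>\<^sub>M lborel))"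
    by (simp add: nn_integral_add)
  also have "\<dots> \<le> ennreal BC + (ennreal h * (ennreal (h powr \<alpha> * (1/\<alpha> + 1/(1-\<alpha>))) * ennreal (R powr (\<alpha>-1-b) * (2/(1-b) + 1/(1-\<alpha>)))))
       + (ennreal h * (ennreal (h powr \<alpha> * (1/\<alpha> + 1/(1-\<alpha>))) * ennreal (R powr (\<alpha>-1-b) * (2/(1-b) + 1/(1-\<alpha>)))))"
    unfolding TX_def TY_def
    by (intro add_mono BC tailX tailY h al b)
  finally show ?thesis by (simp add: mult_2 add.assoc)
qed



lemma final_combine:
  fixes BC B1 B2 h X Y :: real
  assumes "0 \<le> BC" "BC \<le> B1" "h * (X * Y) \<le> B2" "0 \<le> h" "0 \<le> X" "0 \<le> Y"
  shows "ennreal BC + 2 * (ennreal h * (ennreal X * ennreal Y)) \<le> ennreal (B1 + 2 * B2)"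
proof -
  have "ennreal BC + 2 * (ennreal h * (ennreal X * ennreal Y)) = ennreal (BC + 2 * (h * (X * Y)))"
    using assms by (simp add: ennreal_mult ennreal_plus)
  also have "\<dots> \<le> ennreal (B1 + 2 * B2)" using assms by (intro ennreal_leI) linarith
  finally show ?thesis .
qed

definition KC :: "real \<Rightarrow> real \<Rightarrow> real \<Rightarrow> real \<Rightarrow> real" where
  "KC \<alpha> H P r = (1/\<alpha> + 1/(1-\<alpha>))^2 + (1/(1-P)^2 + 2*((2/(1-r)+1)/(1-P)))
     + 2 * ((1/\<alpha> + 1/(1-\<alpha>)) * (2/(1-(2-2*H)) + 1/(1-\<alpha>)))"

lemma tail_real:
  fixes h R D \<alpha> b :: real
  assumes "0 < h" "h \<le> R" "0 < D" "D \<le> R" "\<alpha> < 1" "0 \<le> b" "0 \<le> Cm" "0 \<le> CF"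
  shows "h * ((h powr \<alpha> * Cm) * (R powr (\<alpha>-1-b) * CF)) \<le> Cm * CF * h powr (2*\<alpha>) * D powr (-b)"
proof -
  have R0: "0 < R" using assms by linarith
  have "R powr (\<alpha>-1-b) = R powr (\<alpha>-1) * R powr (-b)"
    unfolding powr_add[symmetric] by (rule arg_cong[where f="\<lambda>t. R powr t"]) simp
  also have "\<dots> \<le> h powr (\<alpha>-1) * D powr (-b)"
    using assms R0 by (intro mult_mono powr_mono2') auto
  finally have Rb: "R powr (\<alpha>-1-b) \<le> h powr (\<alpha>-1) * D powr (-b)" .
  have hh: "h * h powr \<alpha> * h powr (\<alpha>-1) = h powr (2*\<alpha>)"
  proof -
    have "h * h powr \<alpha> * h powr (\<alpha>-1) = h powr 1 * h powr \<alpha> * h powr (\<alpha>-1)"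
      using assms by simp
    also have "\<dots> = h powr (1 + \<alpha> + (\<alpha>-1))"
      by (simp only: powr_add)
    finally show ?thesis by simp
  qed
  have "h * ((h powr \<alpha> * Cm) * (R powr (\<alpha>-1-b) * CF)) = (h * h powr \<alpha> * Cm * CF) * R powr (\<alpha>-1-b)"
    by (simp add: algebra_simps)
  also have "\<dots> \<le> (h * h powr \<alpha> * Cm * CF) * (h powr (\<alpha>-1) * D powr (-b))"
    using assms Rb by (intro mult_left_mono) auto
  also have "\<dots> = Cm * CF * (h * h powr \<alpha> * h powr (\<alpha>-1)) * D powr (-b)"
    by (simp add: algebra_simps)
  finally show ?thesis unfolding hh .
qed



lemma KL:
  fixes p q h \<alpha> H P r \<theta> :: real
  assumes h: "0 < h" and al: "0 < \<alpha>" "\<alpha> < 1" and H: "1/2 < H" "H < 1"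
    and P: "0 \<le> P" "P < 1" and r: "0 \<le> r" "r < 1" and th: "0 \<le> \<theta>" "\<theta> \<le> 1/2"
    and ea: "1 - \<alpha> = P * (1 - \<theta>)" and eb: "2 - 2*H = 2 * \<theta> * r"
  shows "(\<integral>\<^sup>+z. ennreal (mf \<alpha> h (p - fst z) * mf \<alpha> h (q - snd z) * \<bar>fst z - snd z\<bar> powr (2*H-2)) \<partial>(lborel \<Otimes>\<^sub>M lborel))
     \<le> ennreal (KC \<alpha> H P r * h powr (2*\<alpha>) * ((\<bar>q-p\<bar>+h)/5) powr (2*H-2))"
proof -
  define b where "b = 2 - 2*H"
  have b: "0 \<le> b" "b < 1" using H by (auto simp: b_def)
  have ebb: "2*H-2 = -b" by (simp add: b_def)
  define D where "D = (\<bar>q-p\<bar>+h)/5"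
  have D0: "0 < D" using h by (simp add: D_def)
  define Cm where "Cm = 1/\<alpha> + 1/(1-\<alpha>)"
  define CF where "CF = 2/(1-b) + 1/(1-\<alpha>)"
  define CL where "CL = 1/(1-P)^2 + 2*((2/(1-r)+1)/(1-P))"
  have Cm0: "0 \<le> Cm" and CF0: "0 \<le> CF" and CL0: "0 \<le> CL"
    using al b P r by (auto simp: Cm_def CF_def CL_def)
  have KCeq: "KC \<alpha> H P r = Cm^2 + CL + 2*(Cm*CF)"
    unfolding KC_def Cm_def CF_def CL_def b_def by simp
  have hX: "0 \<le> h powr \<alpha> * Cm" using Cm0 by simp
  have hpow2: "h powr \<alpha> * h powr \<alpha> = h powr (2*\<alpha>)"
    by (simp flip: powr_add)
  have main: "(\<integral>\<^sup>+z. ennreal (mf \<alpha> h (p - fst z) * mf \<alpha> h (q - snd z) * \<bar>fst z - snd z\<bar> powr (-b)) \<partial>(lborel \<Otimes>\<^sub>M lborel))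
     \<le> ennreal ((Cm^2 + CL) * h powr (2*\<alpha>) * D powr (-b) + 2 * (Cm * CF * h powr (2*\<alpha>) * D powr (-b)))"
  proof (cases "4*h \<le> \<bar>q-p\<bar>")
    case True
    define R where "R = \<bar>q-p\<bar>/4"
    have hR: "h \<le> R" using True by (simp add: R_def)
    have DR: "D \<le> R" using True by (simp add: R_def D_def)
    define K where "K = (3*\<bar>q-p\<bar>/4) powr (-b)"
    have K0: "0 \<le> K" by (simp add: K_def)
    have KD: "K \<le> D powr (-b)" unfolding K_def using True D0 b h
      by (intro powr_mono2') (auto simp: D_def)
    define CoreR where "CoreR = (\<lambda>z::real\<times>real. K * (mf \<alpha> h (p - fst z) * mf \<alpha> h (q - snd z)))"
    have cm: "CoreR \<in> borel_measurable (lborel \<Otimes>\<^sub>M lborel)" unfolding CoreR_def by measurable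
    have c0: "0 \<le> CoreR z" for z unfolding CoreR_def using K0 h by (auto intro!: mult_nonneg_nonneg mf_nonneg)
    have core: "mf \<alpha> h (p - u) * mf \<alpha> h (q - v) * \<bar>u - v\<bar> powr (-b) \<le> CoreR (u, v)"
      if "0 < p - u" "p - u < R" "0 < q - v" "q - v < R" for u v
    proof -
      have "3*\<bar>q-p\<bar>/4 \<le> \<bar>u - v\<bar>" using that unfolding R_def by (cases "p \<le> q"; cases "u \<le> v") (simp_all add: abs_if)
      moreover have "0 < 3*\<bar>q-p\<bar>/4" using True h by (auto intro: divide_pos_pos)
      ultimately have "\<bar>u - v\<bar> powr (-b) \<le> K" unfolding K_def using b by (intro powr_mono2') auto
      moreover have "0 \<le> mf \<alpha> h (p - u) * mf \<alpha> h (q - v)" using h by (intro mult_nonneg_nonneg mf_nonneg) auto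
      ultimately have "\<bar>u - v\<bar> powr (-b) * (mf \<alpha> h (p - u) * mf \<alpha> h (q - v)) \<le> K * (mf \<alpha> h (p - u) * mf \<alpha> h (q - v))"
        by (intro mult_right_mono) auto
      thus ?thesis unfolding CoreR_def by (simp add: algebra_simps)
    qed
    have BC: "(\<integral>\<^sup>+z. ennreal (CoreR z) \<partial>(lborel \<Otimes>\<^sub>M lborel)) \<le> ennreal (K * ((h powr \<alpha> * Cm) * (h powr \<alpha> * Cm)))"
    proof -
      have "(\<integral>\<^sup>+z. ennreal (CoreR z) \<partial>(lborel \<Otimes>\<^sub>M lborel)) = (\<integral>\<^sup>+z. ennreal K * (ennreal (mf \<alpha> h (p - fst z)) * ennreal (mf \<alpha> h (q - snd z))) \<partial>(lborel \<Otimes>\<^sub>M lborel))"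
        unfolding CoreR_def using K0 h by (intro nn_integral_cong) (simp add: ennreal_mult mf_nonneg)
      also have "\<dots> \<le> ennreal K * (ennreal (h powr \<alpha> * Cm) * ennreal (h powr \<alpha> * Cm))"
        unfolding Cm_def by (rule coreFar[OF h al K0])
      also have "\<dots> = ennreal (K * ((h powr \<alpha> * Cm) * (h powr \<alpha> * Cm)))"
        using K0 hX by (simp add: ennreal_mult)
      finally show ?thesis .
    qed
    have A: "(\<integral>\<^sup>+z. ennreal (mf \<alpha> h (p - fst z) * mf \<alpha> h (q - snd z) * \<bar>fst z - snd z\<bar> powr (-b)) \<partial>(lborel \<Otimes>\<^sub>M lborel))
      \<le> ennreal (K * ((h powr \<alpha> * Cm) * (h powr \<alpha> * Cm))) + 2 * (ennreal h * (ennreal (h powr \<alpha> * Cm) * ennreal (R powr (\<alpha>-1-b) * CF)))"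
      unfolding Cm_def CF_def by (rule KL_assemble[OF h(1) hR al b cm c0 core BC[unfolded Cm_def]])
    have "K * ((h powr \<alpha> * Cm) * (h powr \<alpha> * Cm)) = K * (Cm^2 * h powr (2*\<alpha>))"
      using hpow2 by (simp add: power2_eq_square algebra_simps)
    also have "\<dots> \<le> D powr (-b) * (Cm^2 * h powr (2*\<alpha>))" using KD Cm0 by (intro mult_right_mono) auto
    also have "\<dots> \<le> (Cm^2 + CL) * h powr (2*\<alpha>) * D powr (-b)" using CL0 by (simp add: algebra_simps)
    finally have B1: "K * ((h powr \<alpha> * Cm) * (h powr \<alpha> * Cm)) \<le> (Cm^2 + CL) * h powr (2*\<alpha>) * D powr (-b)" .
    have B2: "h * ((h powr \<alpha> * Cm) * (R powr (\<alpha>-1-b) * CF)) \<le> Cm * CF * h powr (2*\<alpha>) * D powr (-b)"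
      by (rule tail_real[OF h hR D0 DR al(2) b(1) Cm0 CF0])
    have "ennreal (K * ((h powr \<alpha> * Cm) * (h powr \<alpha> * Cm))) + 2 * (ennreal h * (ennreal (h powr \<alpha> * Cm) * ennreal (R powr (\<alpha>-1-b) * CF)))
       \<le> ennreal ((Cm^2 + CL) * h powr (2*\<alpha>) * D powr (-b) + 2 * (Cm * CF * h powr (2*\<alpha>) * D powr (-b)))"
      using h hX CF0 K0 by (intro final_combine B1 B2) auto
    with A show ?thesis by (rule order.trans)
  next
    case False
    define R where "R = h"
    have hR: "h \<le> R" by (simp add: R_def)
    have DR: "D \<le> h" using False by (simp add: D_def)
    define CoreR where "CoreR = (\<lambda>z::real\<times>real. indicator {p-h..p} (fst z) * indicator {q-h..q} (snd z) * (p - fst z) powr (-(P*(1-\<theta>)))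
            * (q - snd z) powr (-(P*(1-\<theta>))) * \<bar>fst z - snd z\<bar> powr (-(2*\<theta>*r)))"
    have cm: "CoreR \<in> borel_measurable (lborel \<Otimes>\<^sub>M lborel)" unfolding CoreR_def by measurable
    have c0: "0 \<le> CoreR z" for z unfolding CoreR_def by (auto simp: indicator_def)
    have core: "mf \<alpha> h (p - u) * mf \<alpha> h (q - v) * \<bar>u - v\<bar> powr (-b) \<le> CoreR (u, v)"
      if "0 < p - u" "p - u < R" "0 < q - v" "q - v < R" for u v
    proof -
      have i: "indicator {p-h..p} u = (1::real)" "indicator {q-h..q} v = (1::real)"
        using that by (auto simp: R_def indicator_def)
      have "mf \<alpha> h (p - u) * mf \<alpha> h (q - v) \<le> (p - u) powr (\<alpha>-1) * (q - v) powr (\<alpha>-1)"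
        using h by (intro mult_mono mf_le_pow mf_nonneg) auto
      hence "mf \<alpha> h (p - u) * mf \<alpha> h (q - v) * \<bar>u - v\<bar> powr (-b) \<le> (p - u) powr (\<alpha>-1) * (q - v) powr (\<alpha>-1) * \<bar>u - v\<bar> powr (-b)"
        by (intro mult_right_mono) auto
      also have "\<dots> = CoreR (u, v)" unfolding CoreR_def
        using i by (simp add: b_def flip: ea eb)
      finally show ?thesis .
    qed
    have BC: "(\<integral>\<^sup>+z. ennreal (CoreR z) \<partial>(lborel \<Otimes>\<^sub>M lborel)) \<le> ennreal (CL * h powr (2-2*(P*(1-\<theta>))-2*\<theta>*r))"
      unfolding CoreR_def CL_def by (rule L2D[OF h P r th])
    have A: "(\<integral>\<^sup>+z. ennreal (mf \<alpha> h (p - fst z) * mf \<alpha> h (q - snd z) * \<bar>fst z - snd z\<bar> powr (-b)) \<partial>(lborel \<Otimes>\<^sub>M lborel))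
      \<le> ennreal (CL * h powr (2-2*(P*(1-\<theta>))-2*\<theta>*r)) + 2 * (ennreal h * (ennreal (h powr \<alpha> * Cm) * ennreal (R powr (\<alpha>-1-b) * CF)))"
      unfolding Cm_def CF_def by (rule KL_assemble[OF h(1) hR al b cm c0 core BC])
    have "CL * h powr (2-2*(P*(1-\<theta>))-2*\<theta>*r) = CL * (h powr (2*\<alpha>) * h powr (-b))"
    proof -
      have "2-2*(P*(1-\<theta>))-2*\<theta>*r = 2*\<alpha> + (-b)" using ea eb unfolding b_def by (simp flip: ea eb) 
      thus ?thesis by (simp only: powr_add)
    qed
    also have "\<dots> \<le> CL * (h powr (2*\<alpha>) * D powr (-b))"
      using CL0 D0 DR b by (intro mult_left_mono powr_mono2') auto
    also have "\<dots> \<le> (Cm^2 + CL) * h powr (2*\<alpha>) * D powr (-b)"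
      using Cm0 by (simp add: algebra_simps)
    finally have B1: "CL * h powr (2-2*(P*(1-\<theta>))-2*\<theta>*r) \<le> (Cm^2 + CL) * h powr (2*\<alpha>) * D powr (-b)" .
    have B2: "h * ((h powr \<alpha> * Cm) * (R powr (\<alpha>-1-b) * CF)) \<le> Cm * CF * h powr (2*\<alpha>) * D powr (-b)"
      using tail_real[OF h hR D0 _ al(2) b(1) Cm0 CF0] DR by (simp add: R_def)
    have "ennreal (CL * h powr (2-2*(P*(1-\<theta>))-2*\<theta>*r)) + 2 * (ennreal h * (ennreal (h powr \<alpha> * Cm) * ennreal (R powr (\<alpha>-1-b) * CF)))
       \<le> ennreal ((Cm^2 + CL) * h powr (2*\<alpha>) * D powr (-b) + 2 * (Cm * CF * h powr (2*\<alpha>) * D powr (-b)))"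
      using h hX CF0 CL0 by (intro final_combine B1 B2) auto
    with A show ?thesis by (rule order.trans)
  qed
  have "(Cm^2 + CL) * h powr (2*\<alpha>) * D powr (-b) + 2 * (Cm * CF * h powr (2*\<alpha>) * D powr (-b))
      = KC \<alpha> H P r * h powr (2*\<alpha>) * ((\<bar>q-p\<bar>+h)/5) powr (2*H-2)"
    unfolding KCeq ebb D_def by (simp add: algebra_simps)
  with main show ?thesis unfolding ebb by simp
qed



lemma bern:
  fixes t \<beta> :: real
  assumes "0 \<le> t" "-1 \<le> \<beta>"
  shows "1 - t \<le> (1 + t) powr \<beta>"
proof -
  have "(1 + t) powr (-1) \<le> (1 + t) powr \<beta>" using assms by (intro powr_mono) auto
  moreover have "(1 + t) powr (-1) = 1 / (1 + t)" using assms by (simp add: powr_minus divide_inverse)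
  moreover have "1 - t \<le> 1 / (1 + t)" using assms by (simp add: field_simps)
  ultimately show ?thesis by linarith
qed

lemma diff_bound:
  fixes x y h \<alpha> :: real
  assumes "0 < x" "0 \<le> y" "y \<le> h" "0 < \<alpha>" "\<alpha> < 1"
  shows "x powr (\<alpha>-1) - (x + y) powr (\<alpha>-1) \<le> h * x powr (\<alpha>-2)"
proof -
  have "(x + y) powr (\<alpha>-1) = x powr (\<alpha>-1) * (1 + y/x) powr (\<alpha>-1)"
  proof -
    have "x + y = x * (1 + y/x)" using assms by (simp add: field_simps)
    thus ?thesis using assms by (simp add: powr_mult)
  qed
  moreover have "1 - y/x \<le> (1 + y/x) powr (\<alpha>-1)" using assms by (intro bern) auto
  ultimately have "x powr (\<alpha>-1) * (1 - y/x) \<le> (x + y) powr (\<alpha>-1)"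
    by (simp add: mult_left_mono)
  hence "x powr (\<alpha>-1) - (x + y) powr (\<alpha>-1) \<le> x powr (\<alpha>-1) * (y/x)" by (simp add: algebra_simps)
  also have "x powr (\<alpha>-1) * (y/x) = y * x powr (\<alpha>-2)"
  proof -
    have "x powr (\<alpha>-1) = x powr (\<alpha>-2) * x"
      using assms powr_add[of x "\<alpha>-2" 1] by simp
    thus ?thesis using assms by simp
  qed
  also have "\<dots> \<le> h * x powr (\<alpha>-2)" using assms by (intro mult_right_mono) auto
  finally show ?thesis .
qed

lemma L_A:
  fixes sh s h \<alpha> u :: real
  assumes "0 \<le> sh" "sh < s" "s \<le> sh + h" "0 < \<alpha>" "\<alpha> < 1"
  shows "0 \<le> Akern \<alpha> sh s u \<and> Akern \<alpha> sh s u \<le> mf \<alpha> h (sh - u) + mf \<alpha> h (s - u)"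
proof -
  have h: "0 < h" using assms by linarith
  have m0: "0 \<le> mf \<alpha> h (sh - u)" "0 \<le> mf \<alpha> h (s - u)" using h by (auto intro: mf_nonneg)
  show ?thesis
  proof (cases "0 < u \<and> u < sh")
    case True
    have A: "Akern \<alpha> sh s u = (sh - u) powr (\<alpha>-1) - (s - u) powr (\<alpha>-1)"
      using True assms by (simp add: Akern_def indicator_def)
    have le1: "(s - u) powr (\<alpha>-1) \<le> (sh - u) powr (\<alpha>-1)" using True assms by (intro powr_mono2') auto
    have d: "(sh - u) powr (\<alpha>-1) - (sh - u + (s - sh)) powr (\<alpha>-1) \<le> h * (sh - u) powr (\<alpha>-2)"
      using True assms by (intro diff_bound) auto
    have "Akern \<alpha> sh s u \<le> mf \<alpha> h (sh - u)"
      using True A d unfolding mf_def by simp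
    then show ?thesis using A le1 m0 by linarith
  next
    case False
    note F = False
    show ?thesis
    proof (cases "sh < u \<and> u < s")
      case True
      have A: "Akern \<alpha> sh s u = (s - u) powr (\<alpha>-1)"
        using True by (simp add: Akern_def indicator_def)
      have "(s - u) powr (\<alpha>-1) = (s - u) powr (\<alpha>-2) * (s - u)"
        using True powr_add[of "s-u" "\<alpha>-2" 1] by simp
      also have "\<dots> \<le> (s - u) powr (\<alpha>-2) * h" using True assms by (intro mult_left_mono) auto
      finally have "(s - u) powr (\<alpha>-1) \<le> h * (s - u) powr (\<alpha>-2)" by (simp add: mult.commute)
      hence "mf \<alpha> h (s - u) = (s - u) powr (\<alpha>-1)" using True by (simp add: mf_def)
      then show ?thesis using A m0 by simp
    next
      case False
      then have "Akern \<alpha> sh s u = 0" using F by (auto simp: Akern_def indicator_def)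
      then show ?thesis using m0 by simp
    qed
  qed
qed



lemma params:
  fixes H \<alpha> :: real
  assumes "1/2 < H" "H < 1" "1 - H < \<alpha>" "\<alpha> < 1"
  shows "\<exists>P r \<theta>. 0 \<le> P \<and> P < 1 \<and> 0 \<le> r \<and> r < 1 \<and> 0 \<le> \<theta> \<and> \<theta> \<le> 1/2
     \<and> 1 - \<alpha> = P * (1 - \<theta>) \<and> 2 - 2*H = 2 * \<theta> * r"
proof -
  define b where "b = 2 - 2*H"
  have b: "0 < b" "b < 1" using assms by (auto simp: b_def)
  have a0: "0 < \<alpha>" using assms by linarith
  have b2a: "b / (2*\<alpha>) < 1" using assms a0 by (simp add: b_def field_simps)
  define M where "M = max b (b / (2*\<alpha>))"
  have M: "b \<le> M" "b/(2*\<alpha>) \<le> M" "M < 1" using b b2a by (auto simp: M_def)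
  define r where "r = (1 + M)/2"
  have r: "M < r" "r < 1" "0 < r" using M b by (auto simp: r_def)
  define \<theta> where "\<theta> = b / (2*r)"
  have th0: "0 \<le> \<theta>" using b r by (simp add: \<theta>_def)
  have th1: "\<theta> \<le> 1/2" using b r M by (simp add: \<theta>_def field_simps)
  have tha: "\<theta> < \<alpha>"
  proof -
    have "b/(2*\<alpha>) < r" using M r by linarith
    hence "b < r * (2*\<alpha>)" using a0 by (simp add: field_simps)
    thus ?thesis using r a0 by (simp add: \<theta>_def field_simps)
  qed
  define P where "P = (1 - \<alpha>) / (1 - \<theta>)"
  have P0: "0 \<le> P" using assms th1 by (simp add: P_def)
  have P1: "P < 1" using tha th1 by (simp add: P_def field_simps)
  have ea: "1 - \<alpha> = P * (1 - \<theta>)" using th1 by (simp add: P_def)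
  have eb: "2 - 2*H = 2 * \<theta> * r" using r by (simp add: \<theta>_def b_def)
  show ?thesis using P0 P1 r th0 th1 ea eb by (intro exI[of _ P] exI[of _ r] exI[of _ \<theta>]) auto
qed

lemma KC_nonneg:
  assumes "0 < \<alpha>" "\<alpha> < 1" "1/2 < H" "H < 1" "P < 1" "r < 1"
  shows "0 \<le> KC \<alpha> H P r"
  using assms unfolding KC_def by (intro add_nonneg_nonneg mult_nonneg_nonneg) auto



lemma KL2:
  fixes p q h \<alpha> H P r \<theta> d :: real
  assumes h: "0 < h" and al: "0 < \<alpha>" "\<alpha> < 1" and H: "1/2 < H" "H < 1"
    and P: "0 \<le> P" "P < 1" and r: "0 \<le> r" "r < 1" and th: "0 \<le> \<theta>" "\<theta> \<le> 1/2"
    and ea: "1 - \<alpha> = P * (1 - \<theta>)" and eb: "2 - 2*H = 2 * \<theta> * r"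
    and d: "0 < d" "d \<le> \<bar>q - p\<bar> + h"
  shows "(\<integral>\<^sup>+z. ennreal (mf \<alpha> h (p - fst z) * mf \<alpha> h (q - snd z) * \<bar>fst z - snd z\<bar> powr (2*H-2)) \<partial>(lborel \<Otimes>\<^sub>M lborel))
     \<le> ennreal (KC \<alpha> H P r * 5 powr (2-2*H) * h powr (2*\<alpha>) * d powr (2*H-2))"
proof -
  have "((\<bar>q-p\<bar>+h)/5) powr (2*H-2) \<le> (d/5) powr (2*H-2)"
    using d H by (intro powr_mono2') auto
  also have "(d/5) powr (2*H-2) = 5 powr (2-2*H) * d powr (2*H-2)"
  proof -
    have e1: "(d/5) powr (2*H-2) = d powr (2*H-2) / 5 powr (2*H-2)" by (rule powr_divide)
    have e2: "(5::real) powr (2-2*H) = 1 / 5 powr (2*H-2)"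
      using powr_minus_divide[of "5::real" "2*H-2"] by simp
    show ?thesis unfolding e1 e2 by simp
  qed
  finally have X: "((\<bar>q-p\<bar>+h)/5) powr (2*H-2) \<le> 5 powr (2-2*H) * d powr (2*H-2)" .
  have K0: "0 \<le> KC \<alpha> H P r" using KC_nonneg al H P r by auto
  have "KC \<alpha> H P r * h powr (2*\<alpha>) * ((\<bar>q-p\<bar>+h)/5) powr (2*H-2) \<le> KC \<alpha> H P r * h powr (2*\<alpha>) * (5 powr (2-2*H) * d powr (2*H-2))"
    using K0 X by (intro mult_left_mono) auto
  hence "ennreal (KC \<alpha> H P r * h powr (2*\<alpha>) * ((\<bar>q-p\<bar>+h)/5) powr (2*H-2)) \<le> ennreal (KC \<alpha> H P r * 5 powr (2-2*H) * h powr (2*\<alpha>) * d powr (2*H-2))"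
    by (intro ennreal_leI) (simp add: algebra_simps)
  with KL[OF h al H P r th ea eb, of p q] show ?thesis by (rule order.trans)
qed



theorem lemma4p3:
  fixes H \<alpha> T :: real
  assumes "1/2 < H" "H < 1" "1 - H < \<alpha>" "\<alpha> < 1" "T > 0"
  shows "\<exists>C::real. \<forall>N::nat. N \<ge> 2 \<longrightarrow>
           (\<forall>i j s \<tau>. 1 \<le> i \<and> i < j \<and> j \<le> N
              \<and> s \<in> {real (i - 1) * (T / N) <.. real i * (T / N)}
              \<and> \<tau> \<in> {real (j - 1) * (T / N) <.. real j * (T / N)}
            \<longrightarrow> (\<integral>\<^sup>+ (u, v). ennreal (indicator ({0..T} \<times> {0..T}) (u, v)
                    * Akern \<alpha> (real (i - 1) * (T / N)) s u
                    * Akern \<alpha> (real (j - 1) * (T / N)) \<tau> v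
                    * \<bar>u - v\<bar> powr (2 * H - 2)) \<partial>(lborel \<Otimes>\<^sub>M lborel))
                \<le> ennreal (C * (T / N) powr (2 * \<alpha>) * (\<tau> - s) powr (2 * H - 2)))"
proof -
  obtain P r \<theta> where P: "0 \<le> P" "P < 1" and r: "0 \<le> r" "r < 1" and th: "0 \<le> \<theta>" "\<theta> \<le> 1/2"
    and ea: "1 - \<alpha> = P * (1 - \<theta>)" and eb: "2 - 2*H = 2 * \<theta> * r"
    using params[OF assms(1-4)] by blast
  have al: "0 < \<alpha>" "\<alpha> < 1" using assms by linarith+
  have H: "1/2 < H" "H < 1" using assms by auto
  define C0 where "C0 = KC \<alpha> H P r * 5 powr (2-2*H)"
  have C00: "0 \<le> C0" unfolding C0_def using KC_nonneg[OF al H P(2) r(2)] by simp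
  show ?thesis
  proof (intro exI[of _ "4 * C0"] allI impI)
    fix N :: nat and i j :: nat and s \<tau> :: real
    assume N: "N \<ge> 2"
    assume c: "1 \<le> i \<and> i < j \<and> j \<le> N
              \<and> s \<in> {real (i - 1) * (T / N) <.. real i * (T / N)}
              \<and> \<tau> \<in> {real (j - 1) * (T / N) <.. real j * (T / N)}"
    define h where "h = T / real N"
    have h: "0 < h" using N assms by (simp add: h_def)
    define sh where "sh = real (i - 1) * (T / N)"
    define tb where "tb = real (j - 1) * (T / N)"
    have ri: "real (i - 1) = real i - 1" "real (j - 1) = real j - 1" using c by (auto simp: of_nat_diff)
    have sh0: "0 \<le> sh" using assms by (simp add: sh_def)
    have tb0: "0 \<le> tb" using assms by (simp add: tb_def)
    have ei: "real i * (T / real N) = sh + h" unfolding sh_def h_def ri using N by (simp add: field_simps)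
    have ej: "real j * (T / real N) = tb + h" unfolding tb_def h_def ri using N by (simp add: field_simps)
    have sI: "s \<in> {sh<..real i * (T / real N)}" "\<tau> \<in> {tb<..real j * (T / real N)}"
      using c unfolding sh_def tb_def by auto
    have s1: "sh < s" "s \<le> sh + h" using sI(1) ei by auto
    have t1: "tb < \<tau>" "\<tau> \<le> tb + h" using sI(2) ej by auto
    have ij: "real i + 1 \<le> real j" using c by linarith
    have st: "sh + h \<le> tb"
    proof -
      have hT: "T / real N = h" by (simp add: h_def)
      have "tb - (sh + h) = (real j - real i - 1) * h" using ei ej unfolding hT by (simp add: algebra_simps)
      moreover have "0 \<le> (real j - real i - 1) * h" using ij h by (intro mult_nonneg_nonneg) auto
      ultimately show ?thesis by linarith
    qed
    define d where "d = \<tau> - s"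
    have d0: "0 < d" using s1 t1 st by (simp add: d_def)
    define G where "G = (\<lambda>p q (z::real\<times>real). ennreal (mf \<alpha> h (p - fst z) * mf \<alpha> h (q - snd z) * \<bar>fst z - snd z\<bar> powr (2*H-2)))"
    have Gm[measurable]: "G p q \<in> borel_measurable (lborel \<Otimes>\<^sub>M lborel)" for p q
      unfolding G_def by measurable
    have Gb: "(\<integral>\<^sup>+z. G p q z \<partial>(lborel \<Otimes>\<^sub>M lborel)) \<le> ennreal (C0 * h powr (2*\<alpha>) * d powr (2*H-2))"
      if "d \<le> \<bar>q - p\<bar> + h" for p q
      unfolding G_def C0_def using KL2[OF h al H P r th ea eb d0 that] by (simp add: algebra_simps)
    have pw: "ennreal (indicator ({0..T} \<times> {0..T}) (u, v) * Akern \<alpha> sh s u * Akern \<alpha> tb \<tau> v * \<bar>u - v\<bar> powr (2 * H - 2))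
       \<le> G sh tb (u,v) + G sh \<tau> (u,v) + G s tb (u,v) + G s \<tau> (u,v)" for u v
    proof -
      have A1: "0 \<le> Akern \<alpha> sh s u" "Akern \<alpha> sh s u \<le> mf \<alpha> h (sh - u) + mf \<alpha> h (s - u)"
        using L_A[OF sh0 s1 al] by auto
      have A2: "0 \<le> Akern \<alpha> tb \<tau> v" "Akern \<alpha> tb \<tau> v \<le> mf \<alpha> h (tb - v) + mf \<alpha> h (\<tau> - v)"
        using L_A[OF tb0 t1 al] by auto
      define K where "K = \<bar>u - v\<bar> powr (2 * H - 2)"
      have K0: "0 \<le> K" by (simp add: K_def)
      have m: "0 \<le> mf \<alpha> h (sh - u)" "0 \<le> mf \<alpha> h (s - u)" "0 \<le> mf \<alpha> h (tb - v)" "0 \<le> mf \<alpha> h (\<tau> - v)"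
        using h by (auto intro: mf_nonneg)
      have "indicator ({0..T} \<times> {0..T}) (u, v) * Akern \<alpha> sh s u * Akern \<alpha> tb \<tau> v * K \<le> Akern \<alpha> sh s u * Akern \<alpha> tb \<tau> v * K"
        using A1 A2 K0 by (auto simp: indicator_def)
      also have "\<dots> \<le> (mf \<alpha> h (sh - u) + mf \<alpha> h (s - u)) * (mf \<alpha> h (tb - v) + mf \<alpha> h (\<tau> - v)) * K"
        using A1 A2 K0 by (intro mult_right_mono mult_mono) auto
      also have "\<dots> = mf \<alpha> h (sh - u) * mf \<alpha> h (tb - v) * K + mf \<alpha> h (sh - u) * mf \<alpha> h (\<tau> - v) * K
          + mf \<alpha> h (s - u) * mf \<alpha> h (tb - v) * K + mf \<alpha> h (s - u) * mf \<alpha> h (\<tau> - v) * K"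
        by (simp add: algebra_simps)
      finally have R: "indicator ({0..T} \<times> {0..T}) (u, v) * Akern \<alpha> sh s u * Akern \<alpha> tb \<tau> v * K \<le> \<dots>" .
      have "ennreal (mf \<alpha> h (sh - u) * mf \<alpha> h (tb - v) * K + mf \<alpha> h (sh - u) * mf \<alpha> h (\<tau> - v) * K
          + mf \<alpha> h (s - u) * mf \<alpha> h (tb - v) * K + mf \<alpha> h (s - u) * mf \<alpha> h (\<tau> - v) * K)
          = G sh tb (u,v) + G sh \<tau> (u,v) + G s tb (u,v) + G s \<tau> (u,v)"
        unfolding G_def K_def using m by simp
      with R show ?thesis unfolding K_def by (metis ennreal_leI)
    qed
    have "(\<integral>\<^sup>+ (u, v). ennreal (indicator ({0..T} \<times> {0..T}) (u, v) * Akern \<alpha> sh s u * Akern \<alpha> tb \<tau> v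
            * \<bar>u - v\<bar> powr (2 * H - 2)) \<partial>(lborel \<Otimes>\<^sub>M lborel))
        \<le> (\<integral>\<^sup>+z. G sh tb z + G sh \<tau> z + G s tb z + G s \<tau> z \<partial>(lborel \<Otimes>\<^sub>M lborel))"
      by (intro nn_integral_mono) (auto simp: pw split: prod.split)
    also have "\<dots> = (\<integral>\<^sup>+z. G sh tb z \<partial>(lborel \<Otimes>\<^sub>M lborel)) + (\<integral>\<^sup>+z. G sh \<tau> z \<partial>(lborel \<Otimes>\<^sub>M lborel))
        + (\<integral>\<^sup>+z. G s tb z \<partial>(lborel \<Otimes>\<^sub>M lborel)) + (\<integral>\<^sup>+z. G s \<tau> z \<partial>(lborel \<Otimes>\<^sub>M lborel))"
      by (simp add: nn_integral_add)
    also have "\<dots> \<le> ennreal (C0 * h powr (2*\<alpha>) * d powr (2*H-2)) + ennreal (C0 * h powr (2*\<alpha>) * d powr (2*H-2))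
        + ennreal (C0 * h powr (2*\<alpha>) * d powr (2*H-2)) + ennreal (C0 * h powr (2*\<alpha>) * d powr (2*H-2))"
      using s1 t1 st by (intro add_mono Gb) (auto simp: d_def)
    also have "\<dots> = ennreal (4 * C0 * h powr (2*\<alpha>) * d powr (2*H-2))"
    proof -
      define X where "X = C0 * h powr (2*\<alpha>) * d powr (2*H-2)"
      have X0: "0 \<le> X" unfolding X_def using C00 by simp
      have "ennreal X + ennreal X + ennreal X + ennreal X = ennreal (X + X + X + X)" using X0 by (simp only: ennreal_plus add_nonneg_nonneg)
      also have "X + X + X + X = 4 * C0 * h powr (2*\<alpha>) * d powr (2*H-2)" unfolding X_def by simp
      finally show ?thesis unfolding X_def .
    qed
    finally show "(\<integral>\<^sup>+ (u, v). ennreal (indicator ({0..T} \<times> {0..T}) (u, v)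
                    * Akern \<alpha> (real (i - 1) * (T / N)) s u
                    * Akern \<alpha> (real (j - 1) * (T / N)) \<tau> v
                    * \<bar>u - v\<bar> powr (2 * H - 2)) \<partial>(lborel \<Otimes>\<^sub>M lborel))
                \<le> ennreal (4 * C0 * (T / N) powr (2 * \<alpha>) * (\<tau> - s) powr (2 * H - 2))"
      unfolding sh_def tb_def d_def h_def .
  qed
qed

end
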